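(* Let $G$ be a torsion-free group, $n\in\mathbb N$, and $m>(n-1)^2$ an integer. Then for every cubic function $f:2^m\to G$ we have $|f(2^m)|>n$.
   Context: $2^m=\{0,1\}^m$. For $\mathbf g=(g_1,\dots,g_m)\in(G\setminus\{e\})^m$ and $\mathbf x=(x_1,\dots,x_m)\in 2^m$ put $\mathbf g^{\mathbf x}=g_1^{x_1}\cdots g_m^{x_m}$. A function $f:2^m\to G$ is cubic if there is $\mathbf g\in(G\setminus\{e\})^m$ with $f(\mathbf x)=\mathbf g^{\mathbf x}$ for all $\mathbf x\in 2^m$. A group is torsion-free if every non-neutral element has infinite order. *)

theory Defs
  imports "HOL-Algebra.Group"
begin

definition cube_points :: "nat \<Rightarrow> nat list set" where
  "cube_points m = {xs. length xs = m \<and> set xs \<subseteq> {0, 1}}"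

definition cube_prod :: "('a, 'b) monoid_scheme \<Rightarrow> 'a list \<Rightarrow> nat list \<Rightarrow> 'a" where
  "cube_prod G gs xs = foldr (\<lambda>(g, x) acc. (g [^]\<^bsub>G\<^esub> x) \<otimes>\<^bsub>G\<^esub> acc) (zip gs xs) \<one>\<^bsub>G\<^esub>"

definition cubic :: "('a, 'b) monoid_scheme \<Rightarrow> nat \<Rightarrow> (nat list \<Rightarrow> 'a) \<Rightarrow> bool" where
  "cubic G m f \<longleftrightarrow> (\<exists>gs. length gs = m \<and> set gs \<subseteq> carrier G - {\<one>\<^bsub>G\<^esub>} \<and>
      (\<forall>xs\<in>cube_points m. f xs = cube_prod G gs xs))"

definition torsion_free :: "('a, 'b) monoid_scheme \<Rightarrow> bool" where
  "torsion_free G \<longleftrightarrow> (\<forall>x\<in>carrier G. x \<noteq> \<one>\<^bsub>G\<^esub> \<longrightarrow> (\<forall>k::nat. k > 0 \<longrightarrow> x [^]\<^bsub>G\<^esub> k \<noteq> \<one>\<^bsub>G\<^esub>))"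

end

theory Submission
  imports Defs
begin

lemma cube_points_0: "cube_points 0 = {[]}"
  by (auto simp: cube_points_def)

lemma cube_points_Suc:
  "cube_points (Suc k) = (\<lambda>xs. 0#xs) ` cube_points k \<union> (\<lambda>xs. 1#xs) ` cube_points k"
proof
  show "cube_points (Suc k) \<subseteq> (\<lambda>xs. 0#xs) ` cube_points k \<union> (\<lambda>xs. 1#xs) ` cube_points k"
  proof
    fix ys assume "ys \<in> cube_points (Suc k)"
    then obtain x xs where ys: "ys = x#xs" "length xs = k" "x \<in> {0,1}" "set xs \<subseteq> {0,1}"
      by (cases ys) (auto simp: cube_points_def)
    then show "ys \<in> (\<lambda>xs. 0#xs) ` cube_points k \<union> (\<lambda>xs. 1#xs) ` cube_points k"
      by (auto simp: cube_points_def)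
  qed
qed (auto simp: cube_points_def)

lemma cube_prod_Cons: "cube_prod G (g#gs) (x#xs) = (g [^]\<^bsub>G\<^esub> x) \<otimes>\<^bsub>G\<^esub> cube_prod G gs xs"
  by (simp add: cube_prod_def)

lemma cube_prod_closed:
  assumes "group G" "set gs \<subseteq> carrier G"
  shows "cube_prod G gs xs \<in> carrier G"
  using assms(2)
proof (induction gs arbitrary: xs)
  case Nil
  then show ?case using assms(1) by (simp add: cube_prod_def group.is_monoid monoid.one_closed)
next
  case (Cons g gs)
  show ?case
  proof (cases xs)
    case Nil
    then show ?thesis using assms(1) by (simp add: cube_prod_def group.is_monoid monoid.one_closed)
  next
    case (Cons x xs')
    have "g \<in> carrier G" using Cons.prems by auto
    moreover have "cube_prod G gs xs' \<in> carrier G" using Cons.IH Cons.prems by auto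
    ultimately show ?thesis using assms(1) Cons
      by (simp add: cube_prod_Cons group.is_monoid monoid.m_closed monoid.nat_pow_closed)
  qed
qed

lemma not_invariant:
  fixes G (structure)
  assumes G: "group G" and tf: "torsion_free G" and A: "finite A" "A \<subseteq> carrier G" "a \<in> A"
    and g: "g \<in> carrier G" "g \<noteq> \<one>\<^bsub>G\<^esub>"
  shows "\<not> ((\<lambda>y. g \<otimes>\<^bsub>G\<^esub> y) ` A \<subseteq> A)"
proof
  assume sub: "(\<lambda>y. g \<otimes>\<^bsub>G\<^esub> y) ` A \<subseteq> A"
  interpret group G by (rule G)
  have a: "a \<in> carrier G" using A by auto
  have mem: "g [^] k \<otimes> a \<in> A" for k :: nat
  proof (induction k)
    case 0 then show ?case using A a by simp
  next
    case (Suc k)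
    have "g [^] Suc k \<otimes> a = g \<otimes> (g [^] k \<otimes> a)"
      using g a by (metis nat_pow_Suc2 m_assoc nat_pow_closed)
    then show ?case using sub Suc by auto
  qed
  have inj: "inj (\<lambda>k::nat. g [^] k \<otimes> a)"
  proof (rule injI)
    fix i j :: nat assume eq: "g [^] i \<otimes> a = g [^] j \<otimes> a"
    then have eq2: "g [^] i = g [^] j" using g a by (simp add: right_cancel)
    show "i = j"
    proof (rule ccontr)
      assume "i \<noteq> j"
      then consider "i < j" | "j < i" by linarith
      then show False
      proof cases
        case 1
        have "g [^] j = g [^] i \<otimes> g [^] (j - i)" using 1 g by (simp add: nat_pow_mult)
        then have "g [^] (j - i) = \<one>" using eq2 g
          by (metis nat_pow_closed l_cancel_one')
        then show False using tf g 1 unfolding torsion_free_def by auto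
      next
        case 2
        have "g [^] i = g [^] j \<otimes> g [^] (i - j)" using 2 g by (simp add: nat_pow_mult)
        then have "g [^] (i - j) = \<one>" using eq2 g
          by (metis nat_pow_closed l_cancel_one')
        then show False using tf g 2 unfolding torsion_free_def by auto
      qed
    qed
  qed
  have "range (\<lambda>k::nat. g [^] k \<otimes> a) \<subseteq> A" using mem by auto
  moreover have "infinite (range (\<lambda>k::nat. g [^] k \<otimes> a))"
    using inj finite_imageD[of "\<lambda>k::nat. g [^] k \<otimes> a" UNIV] by auto
  ultimately show False using A finite_subset by blast
qed

lemma main:
  fixes G (structure)
  assumes G: "group G" and tf: "torsion_free G"
  shows "set gs \<subseteq> carrier G - {\<one>\<^bsub>G\<^esub>} \<Longrightarrow>
    finite (cube_prod G gs ` cube_points (length gs)) \<and>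
    card (cube_prod G gs ` cube_points (length gs)) \<ge> length gs + 1"
proof (induction gs)
  case Nil
  then show ?case by (simp add: cube_points_0)
next
  case (Cons g gs)
  interpret group G by (rule G)
  define S where "S = cube_prod G gs ` cube_points (length gs)"
  have IH: "finite S" "card S \<ge> length gs + 1" using Cons unfolding S_def by auto
  have g: "g \<in> carrier G" "g \<noteq> \<one>" using Cons.prems by auto
  have Sc: "S \<subseteq> carrier G" unfolding S_def
    using cube_prod_closed[OF G] Cons.prems by auto
  have eq: "cube_prod G (g#gs) ` cube_points (length (g#gs)) = S \<union> (\<lambda>y. g \<otimes> y) ` S"
  proof -
    have c0: "cube_prod G (g#gs) (0#xs) = cube_prod G gs xs" for xs
    proof -
      have "cube_prod G gs xs \<in> carrier G" using cube_prod_closed[OF G] Cons.prems by auto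
      then show ?thesis by (simp add: cube_prod_Cons)
    qed
    have c1: "cube_prod G (g#gs) (Suc 0#xs) = g \<otimes> cube_prod G gs xs" for xs
      using cube_prod_closed[OF G] Cons.prems g by (simp add: cube_prod_Cons)
    show ?thesis unfolding S_def
      by (simp add: cube_points_Suc image_Un image_image c0 c1)
  qed
  obtain a where a: "a \<in> S" using IH by fastforce
  have "\<not> ((\<lambda>y. g \<otimes> y) ` S \<subseteq> S)" using not_invariant[OF G tf IH(1) Sc a g] .
  then have "S \<subset> S \<union> (\<lambda>y. g \<otimes> y) ` S" by auto
  moreover have fin: "finite (S \<union> (\<lambda>y. g \<otimes> y) ` S)" using IH by auto
  ultimately have "card S < card (S \<union> (\<lambda>y. g \<otimes> y) ` S)" by (rule psubset_card_mono[rotated])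
  then show ?case using eq fin IH by simp
qed

theorem lemma4p1:
  fixes G :: "('a, 'b) monoid_scheme" and n m :: nat and f :: "nat list \<Rightarrow> 'a"
  assumes "group G" and "torsion_free G"
    and "int m > (int n - 1)^2"
    and "cubic G m f"
  shows "card (f ` cube_points m) > n"
proof -
  obtain gs where gs: "length gs = m" "set gs \<subseteq> carrier G - {\<one>\<^bsub>G\<^esub>}"
    "\<forall>xs\<in>cube_points m. f xs = cube_prod G gs xs"
    using assms(4) unfolding cubic_def by blast
  have "f ` cube_points m = cube_prod G gs ` cube_points (length gs)"
    using gs by (auto intro!: image_cong)
  then have c: "card (f ` cube_points m) \<ge> m + 1"
    using main[OF assms(1,2) gs(2)] gs(1) by simp
  have "int n \<le> int m"
  proof (cases "n = 0")
    case False
    have "int n - 1 \<le> (int n - 1)^2"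
    proof (cases "n = 1")
      case False
      then have "1 \<le> int n - 1" using \<open>n \<noteq> 0\<close> by linarith
      then have "(int n - 1) * 1 \<le> (int n - 1) * (int n - 1)"
        by (intro mult_left_mono) auto
      then show ?thesis by (simp add: power2_eq_square)
    qed simp
    then show ?thesis using assms(3) by linarith
  qed simp
  then show ?thesis using c by linarith
qed

end
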